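(* For the gossip USD and every $t\ge1$: (1) $\mathbb E_{t-1}[\psi_t]\le\frac{\beta_{t-1}}{n}$. (2) Conditioned on $\mathcal F_{t-1}$, $\psi_t-\mathbb E_{t-1}[\psi_t]$ satisfies the $\big(\frac{24}{n},\frac{400\beta_{t-1}}{n}\big)$-Bernstein condition.
   Context: Vertex set $V$, $|V|=n$; opinions in $\Sigma=[k]\cup\{\bot\}$ ($\bot$ = undecided). USD update rule: $\mathsf{update}(\sigma_1,\sigma_2)=\bot$ if $\sigma_1,\sigma_2\in[k]$ and $\sigma_1\ne\sigma_2$; $=\sigma_2$ if $\sigma_1=\bot$; $=\sigma_1$ otherwise. Gossip USD: given $\mathrm{opn}_t\in\Sigma^V$, every $u\in V$ independently picks $v$ uniformly from $V$ and sets $\mathrm{opn}_{t+1}(u)=\mathsf{update}(\mathrm{opn}_t(u),\mathrm{opn}_t(v))$. Notation: $\alpha_t(i)=|\{u:\mathrm{opn}_t(u)=i\}|/n$, $\beta_t=\sum_{i\in[k]}\alpha_t(i)$, $\gamma_t=\sum_{i\in[k]}\alpha_t(i)^2$, $\psi_t=\beta_t(2\beta_t-1)-\gamma_t$. $(\mathcal F_t)$ is the natural filtration; $\mathbb E_{t-1}$ is conditional expectation given $\mathcal F_{t-1}$. Bernstein condition: for $D,s\ge0$, $X$ satisfies the $(D,s)$-Bernstein condition if $\mathbb E[e^{\lambda X}]\le\exp\!\big(\frac{\lambda^2 s/2}{1-|\lambda|D/3}\big)$ for all real $\lambda$ with $|\lambda|D<3$. Conditioned on $\mathcal F_{t-1}$: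 the same with $\mathbb E_{t-1}$, almost surely. *)

theory Defs
  imports "HOL-Probability.Probability"
begin

text \<open>Opinions: None is the undecided opinion, Some i with i in {1..k} is opinion i.\<close>

definition opinions :: "nat \<Rightarrow> nat option set" where
  "opinions k = insert None (Some ` {1..k})"

fun usd_update :: "nat option \<Rightarrow> nat option \<Rightarrow> nat option" where
  "usd_update (Some a) (Some b) = (if a \<noteq> b then None else Some a)"
| "usd_update None s = s"
| "usd_update (Some a) None = Some a"

definition gossip_step :: "('v::finite \<Rightarrow> nat option) \<Rightarrow> ('v \<Rightarrow> nat option) pmf" where
  "gossip_step opn =
     Pi_pmf UNIV undefined
       (\<lambda>u. map_pmf (\<lambda>v. usd_update (opn u) (opn v)) (pmf_of_set (UNIV :: 'v set)))"

definition alpha :: "('v::finite \<Rightarrow> nat option) \<Rightarrow> nat \<Rightarrow> real" where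
  "alpha opn i = real (card {u. opn u = Some i}) / real CARD('v)"

definition beta :: "nat \<Rightarrow> ('v::finite \<Rightarrow> nat option) \<Rightarrow> real" where
  "beta k opn = (\<Sum>i\<in>{1..k}. alpha opn i)"

definition gamma :: "nat \<Rightarrow> ('v::finite \<Rightarrow> nat option) \<Rightarrow> real" where
  "gamma k opn = (\<Sum>i\<in>{1..k}. (alpha opn i)^2)"

definition psi :: "nat \<Rightarrow> ('v::finite \<Rightarrow> nat option) \<Rightarrow> real" where
  "psi k opn = beta k opn * (2 * beta k opn - 1) - gamma k opn"

definition bernstein_cond :: "'a pmf \<Rightarrow> ('a \<Rightarrow> real) \<Rightarrow> real \<Rightarrow> real \<Rightarrow> bool" where
  "bernstein_cond M X D s \<longleftrightarrow>
     (\<forall>l::real. \<bar>l\<bar> * D < 3 \<longrightarrow>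
        measure_pmf.expectation M (\<lambda>x. exp (l * X x))
          \<le> exp ((l^2 * s / 2) / (1 - \<bar>l\<bar> * D / 3)))"

end

theory Submission
  imports Defs
begin


lemma exp_fin:
  fixes f :: "'a \<Rightarrow> real"
  assumes "finite (set_pmf M)"
  shows "measure_pmf.expectation M f = (\<Sum>a\<in>set_pmf M. pmf M a * f a)"
  using integral_measure_pmf[OF assms, of M f] by simp

lemma fub_pair:
  fixes h :: "'a \<times> 'b \<Rightarrow> real"
  assumes "finite (set_pmf A)" "finite (set_pmf B)"
  shows "measure_pmf.expectation (pair_pmf A B) h =
         measure_pmf.expectation B (\<lambda>b. measure_pmf.expectation A (\<lambda>a. h (a,b)))"
proof -
  have f: "finite (set_pmf (pair_pmf A B))" using assms by simp
  have "measure_pmf.expectation (pair_pmf A B) h = (\<Sum>x\<in>set_pmf A \<times> set_pmf B. pmf (pair_pmf A B) x * h x)"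
    using exp_fin[OF f] by simp
  also have "\<dots> = (\<Sum>a\<in>set_pmf A. \<Sum>b\<in>set_pmf B. pmf A a * pmf B b * h (a,b))"
    by (simp add: sum.cartesian_product case_prod_unfold) (intro sum.cong refl, metis pmf_pair prod.collapse)
  also have "\<dots> = (\<Sum>b\<in>set_pmf B. pmf B b * (\<Sum>a\<in>set_pmf A. pmf A a * h (a,b)))"
    by (subst sum.swap) (simp add: sum_distrib_left mult_ac)
  also have "\<dots> = measure_pmf.expectation B (\<lambda>b. measure_pmf.expectation A (\<lambda>a. h (a,b)))"
    using assms by (simp add: exp_fin)
  finally show ?thesis .
qed

lemma fin_Pi:
  assumes "finite A" "\<And>b. finite (set_pmf (p b))"
  shows "finite (set_pmf (Pi_pmf A dflt p))"
  using assms by (simp add: set_Pi_pmf finite_PiE_dflt)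

lemma fub_Pi:
  fixes H :: "('a \<Rightarrow> 'b) \<Rightarrow> real"
  assumes "finite A" "a \<notin> A" "\<And>b. finite (set_pmf (p b))"
  shows "measure_pmf.expectation (Pi_pmf (insert a A) dflt p) H =
     measure_pmf.expectation (Pi_pmf A dflt p) (\<lambda>f. measure_pmf.expectation (p a) (\<lambda>y. H (f(a:=y))))"
  using assms by (simp add: Pi_pmf_insert fub_pair fin_Pi case_prod_unfold)

lemma exp_quad_bound:
  fixes x :: real
  shows "exp x \<le> 1 + x + x^2 * exp \<bar>x\<bar> / 2"
proof -
  obtain t where t: "\<bar>t\<bar> \<le> \<bar>x\<bar>" "exp x = (\<Sum>m<2. x ^ m / fact m) + exp t / fact 2 * x ^ 2"
    using Maclaurin_exp_le[of x 2] by blast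
  have "exp t \<le> exp \<bar>x\<bar>" using t(1) by simp
  hence "exp t / 2 * x^2 \<le> exp \<bar>x\<bar> / 2 * x^2" by (intro mult_right_mono) auto
  thus ?thesis using t(2) by (simp add: numeral_2_eq_2 mult_ac)
qed

lemma sv_bound:
  fixes Y :: "'a \<Rightarrow> real"
  assumes fin: "finite (set_pmf M)"
  and bd: "\<And>y. y \<in> set_pmf M \<Longrightarrow> \<bar>Y y\<bar> \<le> b"
  and mean: "measure_pmf.expectation M Y = 0"
  and var: "measure_pmf.expectation M (\<lambda>y. (Y y)^2) \<le> v"
  shows "measure_pmf.expectation M (\<lambda>y. exp (l * Y y)) \<le> exp (l^2 * v * exp (\<bar>l\<bar>*b) / 2)"
proof -
  define K where "K = l^2 * exp (\<bar>l\<bar>*b) / 2"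
  have K0: "K \<ge> 0" unfolding K_def by simp
  have int: "integrable (measure_pmf M) g" for g :: "'a \<Rightarrow> real"
    using fin by (rule integrable_measure_pmf_finite)
  have pt: "exp (l * Y y) \<le> 1 + l * Y y + K * (Y y)^2" if "y \<in> set_pmf M" for y
  proof -
    have "exp (l * Y y) \<le> 1 + l * Y y + (l * Y y)^2 * exp \<bar>l * Y y\<bar> / 2"
      by (rule exp_quad_bound)
    also have "exp \<bar>l * Y y\<bar> \<le> exp (\<bar>l\<bar> * b)"
      using bd[OF that] by (simp add: abs_mult mult_left_mono)
    hence "(l * Y y)^2 * exp \<bar>l * Y y\<bar> / 2 \<le> (l * Y y)^2 * exp (\<bar>l\<bar> * b) / 2"
      by (intro divide_right_mono mult_left_mono) auto
    finally show ?thesis by (simp add: K_def power_mult_distrib mult_ac)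
  qed
  have "measure_pmf.expectation M (\<lambda>y. exp (l * Y y)) \<le>
        measure_pmf.expectation M (\<lambda>y. 1 + l * Y y + K * (Y y)^2)"
    by (intro integral_mono_AE int AE_pmfI pt)
  also have "\<dots> = 1 + l * measure_pmf.expectation M Y + K * measure_pmf.expectation M (\<lambda>y. (Y y)^2)"
    by (simp add: int)
  also have "\<dots> \<le> 1 + K * v" using mean var K0 by (simp add: mult_left_mono)
  also have "\<dots> \<le> exp (K * v)" by (rule exp_ge_add_one_self)
  finally show ?thesis by (simp add: K_def mult_ac)
qed

lemma exp_abs_le:
  fixes g :: "'a \<Rightarrow> real"
  assumes fin: "finite (set_pmf M)" and bd: "\<And>y. y \<in> set_pmf M \<Longrightarrow> \<bar>g y\<bar> \<le> c"
  shows "\<bar>measure_pmf.expectation M g\<bar> \<le> c"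
proof -
  have int: "integrable (measure_pmf M) h" for h :: "'a \<Rightarrow> real"
    using fin by (rule integrable_measure_pmf_finite)
  have "measure_pmf.expectation M g \<le> measure_pmf.expectation M (\<lambda>_. c)"
    using bd by (intro integral_mono_AE int AE_pmfI) (auto simp: abs_le_iff)
  moreover have "measure_pmf.expectation M (\<lambda>_. -c) \<le> measure_pmf.expectation M g"
  proof (intro integral_mono_AE int AE_pmfI)
    fix y assume "y \<in> set_pmf M"
    from bd[OF this] show "-c \<le> g y" by linarith
  qed
  ultimately show ?thesis by simp
qed

lemma var_le:
  fixes X :: "'a \<Rightarrow> real"
  assumes fin: "finite (set_pmf M)"
  shows "measure_pmf.expectation M (\<lambda>y. (X y - measure_pmf.expectation M X)^2)
         \<le> measure_pmf.expectation M (\<lambda>y. (X y - t)^2)"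
proof -
  define m where "m = measure_pmf.expectation M X"
  have int: "integrable (measure_pmf M) h" for h :: "'a \<Rightarrow> real"
    using fin by (rule integrable_measure_pmf_finite)
  have eq: "(\<lambda>y. (X y - t)^2) = (\<lambda>y. (X y - m)^2 + 2*(m - t) * X y + (t^2 - m^2))"
    by (intro ext) (simp add: power2_eq_square algebra_simps)
  have "measure_pmf.expectation M (\<lambda>y. (X y - t)^2) =
        measure_pmf.expectation M (\<lambda>y. (X y - m)^2) + 2*(m - t) * m + (t^2 - m^2)"
    unfolding eq by (simp add: int m_def)
  also have "\<dots> = measure_pmf.expectation M (\<lambda>y. (X y - m)^2) + (m - t)^2"
    by (simp add: power2_eq_square algebra_simps)
  finally show ?thesis unfolding m_def by simp
qed

lemma gl:
  fixes p :: "'a \<Rightarrow> 'b pmf" and d :: "'a \<Rightarrow> 'b" and F :: "('a \<Rightarrow> 'b) \<Rightarrow> real"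
  assumes "finite A" and fin: "\<And>b. finite (set_pmf (p b))" and c0: "c \<ge> 0"
  and "\<And>x a. a \<in> A \<Longrightarrow> \<bar>F x - F (x(a := d a))\<bar> \<le> c"
  and pr: "\<And>a. a \<in> A \<Longrightarrow> measure_pmf.prob (p a) {z. z \<noteq> d a} \<le> \<pi> a"
  shows "measure_pmf.expectation (Pi_pmf A dflt p)
           (\<lambda>x. exp (l * (F x - measure_pmf.expectation (Pi_pmf A dflt p) F)))
         \<le> exp (l^2 * c^2 * exp (2*\<bar>l\<bar>*c) * (\<Sum>a\<in>A. \<pi> a) / 2)"
  using assms(1,4,5)
proof (induction A arbitrary: F rule: finite_induct)
  case empty
  then show ?case by simp
next
  case (insert a A F)
  have int: "integrable (measure_pmf q) h" if "finite (set_pmf q)" for h :: "_ \<Rightarrow> real" and q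
    using that by (rule integrable_measure_pmf_finite)
  have finA: "finite (set_pmf (Pi_pmf A dflt p))" by (rule fin_Pi) (use insert fin in auto)
  have Fc: "\<bar>F x - F (x(b := d b))\<bar> \<le> c" if "b \<in> insert a A" for x b
    using insert.prems(1)[of b x] that by (simp add: fun_upd_def)
  define G where "G f = measure_pmf.expectation (p a) (\<lambda>y. F (f(a:=y)))" for f
  define EG where "EG = measure_pmf.expectation (Pi_pmf A dflt p) G"
  define Ba where "Ba = exp (l^2 * (c^2 * \<pi> a) * exp (\<bar>l\<bar>*(2*c)) / 2)"
  define BA where "BA = exp (l^2 * c^2 * exp (2*\<bar>l\<bar>*c) * (\<Sum>a\<in>A. \<pi> a) / 2)"
  have EF: "measure_pmf.expectation (Pi_pmf (insert a A) dflt p) F = EG"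
    unfolding EG_def G_def by (rule fub_Pi) (use insert fin in auto)
  have Gc: "\<bar>G x - G (x(b := d b))\<bar> \<le> c" if b: "b \<in> A" for x b
  proof -
    have ab: "a \<noteq> b" using b insert by auto
    have "G x - G (x(b := d b)) = measure_pmf.expectation (p a) (\<lambda>y. F (x(a:=y)) - F ((x(a:=y))(b := d b)))"
      unfolding G_def using ab by (simp add: int fin fun_upd_twist)
    also have "\<bar>\<dots>\<bar> \<le> c"
    proof (rule exp_abs_le[OF fin])
      fix y
      show "\<bar>F (x(a:=y)) - F ((x(a:=y))(b := d b))\<bar> \<le> c"
        using insert.prems(1)[of b "x(a:=y)"] b by (simp add: fun_upd_def)
    qed
    finally show ?thesis .
  qed
  have IH: "measure_pmf.expectation (Pi_pmf A dflt p) (\<lambda>x. exp (l * (G x - EG))) \<le> BA"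
    unfolding EG_def BA_def by (rule insert.IH) (use Gc[unfolded fun_upd_def] insert.prems in auto)
  have step: "measure_pmf.expectation (p a) (\<lambda>y. exp (l * (F (f(a:=y)) - G f))) \<le> Ba" for f
  proof -
    define X where "X = (\<lambda>y. F (f(a:=y)))"
    have GX: "G f = measure_pmf.expectation (p a) X" unfolding G_def X_def by simp
    show ?thesis unfolding Ba_def
    proof (rule sv_bound[OF fin])
      fix y
      have "F (f(a:=y)) - G f = measure_pmf.expectation (p a) (\<lambda>y'. X y - X y')"
        unfolding GX by (simp add: int fin X_def)
      also have "\<bar>\<dots>\<bar> \<le> 2 * c"
      proof (rule exp_abs_le[OF fin])
        fix y'
        have "\<bar>X y - X (d a)\<bar> \<le> c" "\<bar>X y' - X (d a)\<bar> \<le> c"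
          using Fc[of a "f(a:=y)"] Fc[of a "f(a:=y')"]
          by (auto simp: X_def)
        thus "\<bar>X y - X y'\<bar> \<le> 2 * c" by linarith
      qed
      finally show "\<bar>F (f(a:=y)) - G f\<bar> \<le> 2 * c" .
    next
      show "measure_pmf.expectation (p a) (\<lambda>y. F (f(a:=y)) - G f) = 0"
        unfolding GX by (simp add: int fin X_def)
    next
      have "measure_pmf.expectation (p a) (\<lambda>y. (F (f(a:=y)) - G f)^2)
          \<le> measure_pmf.expectation (p a) (\<lambda>y. (X y - X (d a))^2)"
        unfolding GX X_def by (rule var_le[OF fin])
      also have "\<dots> \<le> measure_pmf.expectation (p a) (\<lambda>y. c^2 * indicator {z. z \<noteq> d a} y)"
      proof (intro integral_mono_AE int fin AE_pmfI)
        fix y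
        have "\<bar>X y - X (d a)\<bar> \<le> c"
          using Fc[of a "f(a:=y)"] by (auto simp: X_def)
        hence "(X y - X (d a))^2 \<le> c^2"
          by (metis abs_ge_zero power2_abs power_mono)
        thus "(X y - X (d a))^2 \<le> c^2 * indicator {z. z \<noteq> d a} y"
          by (auto simp: indicator_def)
      qed
      also have "\<dots> = c^2 * measure_pmf.prob (p a) {z. z \<noteq> d a}"
        by simp
      also have "\<dots> \<le> c^2 * \<pi> a"
        using insert.prems(2)[of a] by (intro mult_left_mono) auto
      finally show "measure_pmf.expectation (p a) (\<lambda>y. (F (f(a:=y)) - G f)^2) \<le> c^2 * \<pi> a" .
    qed
  qed
  have "measure_pmf.expectation (Pi_pmf (insert a A) dflt p)
           (\<lambda>x. exp (l * (F x - measure_pmf.expectation (Pi_pmf (insert a A) dflt p) F)))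
      = measure_pmf.expectation (Pi_pmf A dflt p) (\<lambda>f. measure_pmf.expectation (p a)
           (\<lambda>y. exp (l * (F (f(a:=y)) - EG))))"
    unfolding EF by (rule fub_Pi) (use insert fin in auto)
  also have "\<dots> = measure_pmf.expectation (Pi_pmf A dflt p) (\<lambda>f. exp (l * (G f - EG)) *
        measure_pmf.expectation (p a) (\<lambda>y. exp (l * (F (f(a:=y)) - G f))))"
  proof -
    have "exp (l * (F (f(a:=y)) - EG)) = exp (l * (G f - EG)) * exp (l * (F (f(a:=y)) - G f))" for f y
      by (simp add: mult_exp_exp algebra_simps)
    thus ?thesis by simp
  qed
  also have "\<dots> \<le> measure_pmf.expectation (Pi_pmf A dflt p) (\<lambda>f. exp (l * (G f - EG)) * Ba)"
    by (intro integral_mono_AE int finA AE_pmfI mult_left_mono step) auto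
  also have "\<dots> = Ba * measure_pmf.expectation (Pi_pmf A dflt p) (\<lambda>f. exp (l * (G f - EG)))"
    by (simp add: mult.commute)
  also have "\<dots> \<le> Ba * BA"
    using IH by (intro mult_left_mono) (auto simp: Ba_def)
  also have "\<dots> = exp (l^2 * c^2 * exp (2*\<bar>l\<bar>*c) * (\<Sum>a\<in>insert a A. \<pi> a) / 2)"
    unfolding Ba_def BA_def using insert.hyps
    by (simp add: mult_exp_exp[symmetric] algebra_simps add_divide_distrib)
  finally show ?case .
qed



lemma mf_alg:
  fixes sb z p2 p3 p4 :: real
  assumes so: "sb + z = 1" and s0: "sb > 0" and o0: "z \<ge> 0" and p20: "p2 \<ge> 0"
  and h1: "p2^2 \<le> sb * p3" and h2: "sb^2 * p4 \<ge> p2^3"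
  shows "2 * (p2 + 2*z* sb)^2 - (p2 + 2*z* sb) - (p4 + 4*z*p3 + 4*z^2*p2) \<le> 0"
proof -
  define M where "M = p2 + 2*z* sb"
  have e: "sb^2 * (2*M^2 - M*(sb+z)^2 - 4*z^2*p2) - p2^3 - 4*z* sb*p2^2 = 0 - (p2 - sb^2 + z* sb)^2 * (p2 + 2*z* sb)"
    unfolding M_def by (simp add: power2_eq_square power3_eq_cube algebra_simps)
  have "0 - (p2 - sb^2 + z* sb)^2 * (p2 + 2*z* sb) \<le> 0"
    using o0 s0 p20 by (simp add: mult_nonneg_nonneg)
  have a: "4*z* sb*p2^2 \<le> sb^2 * (4*z*p3)"
  proof -
    have "4*z* sb*p2^2 \<le> 4*z* sb*(sb*p3)" using h1 o0 s0 by (intro mult_left_mono) auto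
    thus ?thesis by (simp add: power2_eq_square algebra_simps)
  qed
  have "sb^2 * (2 * M^2 - M - (p4 + 4*z*p3 + 4*z^2*p2)) =
        sb^2 * (2*M^2 - M*(sb+z)^2 - 4*z^2*p2) - sb^2 * p4 - sb^2 * (4*z*p3)"
    using so by (simp add: algebra_simps)
  also have "\<dots> \<le> sb^2 * (2*M^2 - M*(sb+z)^2 - 4*z^2*p2) - p2^3 - 4*z* sb*p2^2"
    using a h2 by linarith
  also have "\<dots> \<le> 0" using e \<open>0 - (p2 - sb^2 + z* sb)^2 * (p2 + 2*z* sb) \<le> 0\<close> by linarith
  finally have "sb^2 * (2 * M^2 - M - (p4 + 4*z*p3 + 4*z^2*p2)) \<le> 0" .
  hence "2 * M^2 - M - (p4 + 4*z*p3 + 4*z^2*p2) \<le> 0"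
    using s0 by (simp add: mult_le_0_iff)
  thus ?thesis unfolding M_def .
qed

lemma mf_ineq:
  fixes a :: "nat \<Rightarrow> real" and I :: "nat set" and z :: real
  assumes fin: "finite I" and a0: "\<And>i. i \<in> I \<Longrightarrow> a i \<ge> 0" and o0: "z \<ge> 0"
  and so: "(\<Sum>i\<in>I. a i) + z = 1"
  shows "2 * (\<Sum>i\<in>I. a i * (a i + 2*z))^2 - (\<Sum>i\<in>I. a i * (a i + 2*z))
         - (\<Sum>i\<in>I. (a i * (a i + 2*z))^2) \<le> 0"
proof -
  define sb where "sb = (\<Sum>i\<in>I. a i)"
  define p2 where "p2 = (\<Sum>i\<in>I. (a i)^2)"
  define p3 where "p3 = (\<Sum>i\<in>I. (a i)^3)"
  define p4 where "p4 = (\<Sum>i\<in>I. (a i)^4)"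
  have S1: "(\<Sum>i\<in>I. a i * (a i + 2*z)) = p2 + 2*z* sb"
    unfolding p2_def sb_def by (simp add: algebra_simps power2_eq_square sum.distrib sum_distrib_left sum_distrib_right)
  have S2: "(\<Sum>i\<in>I. (a i * (a i + 2*z))^2) = p4 + 4*z*p3 + 4*z^2*p2"
  proof -
    have "(a i * (a i + 2*z))^2 = (a i)^4 + 4*z*(a i)^3 + 4*z^2*(a i)^2" for i
      by (simp add: power2_eq_square power3_eq_cube power4_eq_xxxx algebra_simps)
    thus ?thesis unfolding p2_def p3_def p4_def by (simp add: sum.distrib sum_distrib_left)
  qed
  show ?thesis
  proof (cases "sb = 0")
    case True
    hence "\<forall>i\<in>I. a i = 0" using sum_nonneg_eq_0_iff[OF fin] a0 unfolding sb_def by blast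
    thus ?thesis by simp
  next
    case False
    hence s0: "sb > 0" using a0 unfolding sb_def by (metis less_eq_real_def sum_nonneg)
    have p20: "p2 \<ge> 0" unfolding p2_def by (simp add: sum_nonneg)
    have h1: "p2^2 \<le> sb * p3"
    proof -
      have "p2 = (\<Sum>i\<in>I. sqrt (a i) * (a i * sqrt (a i)))"
        unfolding p2_def using a0 by (intro sum.cong) (auto simp: power2_eq_square)
      hence "p2^2 \<le> (\<Sum>i\<in>I. (sqrt (a i))^2) * (\<Sum>i\<in>I. (a i * sqrt (a i))^2)"
        using Cauchy_Schwarz_ineq_sum by metis
      also have "(\<Sum>i\<in>I. (sqrt (a i))^2) = sb" unfolding sb_def using a0 by (intro sum.cong) auto
      also have "(\<Sum>i\<in>I. (a i * sqrt (a i))^2) = p3" unfolding p3_def using a0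
        by (intro sum.cong) (auto simp: power_mult_distrib power3_eq_cube power2_eq_square)
      finally show ?thesis .
    qed
    have h2': "p3^2 \<le> p2 * p4"
    proof -
      have "p3 = (\<Sum>i\<in>I. a i * (a i)^2)" unfolding p3_def by (simp add: power3_eq_cube power2_eq_square mult.assoc)
      hence "p3^2 \<le> (\<Sum>i\<in>I. (a i)^2) * (\<Sum>i\<in>I. ((a i)^2)^2)"
        using Cauchy_Schwarz_ineq_sum by metis
      thus ?thesis unfolding p2_def p4_def by (simp add: power_mult[symmetric])
    qed
    have h2: "sb^2 * p4 \<ge> p2^3"
    proof (cases "p2 = 0")
      case True
      have "p4 \<ge> 0" unfolding p4_def by (simp add: sum_nonneg)
      thus ?thesis using True by simp
    next
      case False
      hence p2p: "p2 > 0" using p20 by simp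
      have "p2^4 = (p2^2)^2" by simp
      also have "\<dots> \<le> (sb*p3)^2" using h1 p20 by (intro power_mono) auto
      also have "\<dots> = sb^2 * p3^2" by (simp add: power_mult_distrib)
      also have "\<dots> \<le> sb^2 * (p2 * p4)" using h2' by (intro mult_left_mono) auto
      finally have "p2 * p2^3 \<le> p2 * (sb^2 * p4)" by (simp add: power_numeral_reduce algebra_simps)
      thus ?thesis using p2p by simp
    qed
    show ?thesis unfolding S1 S2
      using mf_alg[OF _ s0 o0 p20 h1 h2] so unfolding sb_def by simp
  qed
qed



definition ind :: "nat option \<Rightarrow> nat \<Rightarrow> real" where "ind t i = (if t = Some i then 1 else 0)"
definition nn :: "nat option \<Rightarrow> real" where "nn t = (if t = None then 1 else 0)"
definition dec :: "nat \<Rightarrow> nat option \<Rightarrow> real" where "dec k t = (\<Sum>i\<in>{1..k}. ind t i)"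
definition KK :: "nat \<Rightarrow> nat option \<Rightarrow> nat option \<Rightarrow> real" where
  "KK k s t = 2 * dec k s * dec k t - dec k s - (\<Sum>i\<in>{1..k}. ind s i * ind t i)"

lemma dec_eq: "dec k t = (if t \<in> Some ` {1..k} then 1 else 0)"
  by (cases t) (auto simp: dec_def ind_def)

lemma prod_ind_eq: "(\<Sum>i\<in>{1..k}. ind s i * ind t i) = (if s = t \<and> s \<in> Some ` {1..k} then 1 else 0)"
proof -
  have "(\<Sum>i\<in>{1..k}. ind s i * ind t i) = (\<Sum>i\<in>{1..k}. if s = t then ind s i else 0)"
    by (intro sum.cong) (auto simp: ind_def)
  also have "\<dots> = (if s = t then dec k s else 0)" by (simp add: dec_def)
  finally show ?thesis by (simp add: dec_eq)
qed

lemma KK_abs: "\<bar>KK k s t\<bar> \<le> 1"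
  unfolding KK_def prod_ind_eq dec_eq by auto

lemma KK_diag: "KK k s s = 0"
  unfolding KK_def prod_ind_eq dec_eq by auto

lemma card_ind: "real (card {u::'v::finite. x u = Some i}) = (\<Sum>u\<in>UNIV. ind (x u) i)"
proof -
  have "(\<Sum>u\<in>UNIV. ind (x u) i) = (\<Sum>u\<in>{u. x u = Some i}. 1)"
    unfolding ind_def by (simp add: sum.If_cases)
  thus ?thesis by simp
qed

lemma psi_rep:
  fixes x :: "'v::finite \<Rightarrow> nat option"
  shows "psi k x = (\<Sum>u\<in>UNIV. \<Sum>w\<in>UNIV. KK k (x u) (x w)) / (real CARD('v))^2"
proof -
  define N where "N = real CARD('v)"
  have N0: "N > 0" unfolding N_def by simp
  define c where "c i = (\<Sum>u\<in>UNIV. ind (x u) i)" for i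
  define B where "B = (\<Sum>u\<in>UNIV. dec k (x u))"
  define Q where "Q = (\<Sum>u\<in>UNIV. \<Sum>w\<in>UNIV. \<Sum>i\<in>{1..k}. ind (x u) i * ind (x w) i)"
  have al: "alpha x i = c i / N" for i unfolding alpha_def c_def N_def card_ind ..
  have be: "beta k x = B / N"
    unfolding beta_def al B_def dec_def c_def
    by (simp add: sum_divide_distrib[symmetric]) (rule disjI2, rule sum.swap)
  have ga: "gamma k x = Q / N^2"
  proof -
    have "gamma k x = (\<Sum>i\<in>{1..k}. (c i)^2) / N^2"
      unfolding gamma_def al by (simp add: power_divide sum_divide_distrib)
    also have "(\<Sum>i\<in>{1..k}. (c i)^2) = Q"
    proof -
      have "Q = (\<Sum>u\<in>UNIV. \<Sum>i\<in>{1..k}. \<Sum>w\<in>UNIV. ind (x u) i * ind (x w) i)"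
        unfolding Q_def by (intro sum.cong refl sum.swap)
      also have "\<dots> = (\<Sum>i\<in>{1..k}. \<Sum>u\<in>UNIV. \<Sum>w\<in>UNIV. ind (x u) i * ind (x w) i)"
        by (rule sum.swap)
      finally show ?thesis unfolding c_def power2_eq_square sum_product by simp
    qed
    finally show ?thesis .
  qed
  have KKs: "(\<Sum>u\<in>UNIV. \<Sum>w\<in>UNIV. KK k (x u) (x w)) = 2 * B^2 - N * B - Q"
  proof -
    have 1: "(\<Sum>u\<in>UNIV. \<Sum>w\<in>UNIV. dec k (x u) * dec k (x w)) = B^2"
      unfolding B_def power2_eq_square sum_product ..
    have 2: "(\<Sum>u\<in>UNIV. \<Sum>w\<in>(UNIV::'v set). dec k (x u)) = N * B"
      unfolding B_def N_def by (simp add: sum_distrib_left)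
    have "(\<Sum>u\<in>UNIV. \<Sum>w\<in>UNIV. KK k (x u) (x w)) =
       2 * (\<Sum>u\<in>UNIV. \<Sum>w\<in>UNIV. dec k (x u) * dec k (x w)) - (\<Sum>u\<in>UNIV. \<Sum>w\<in>(UNIV::'v set). dec k (x u)) - Q"
      unfolding KK_def Q_def by (simp add: sum_subtractf sum_distrib_left mult.assoc)
    thus ?thesis unfolding 1 2 .
  qed
  have "psi k x = (B/N) * (2 * (B/N) - 1) - Q/N^2" unfolding psi_def be ga ..
  also have "\<dots> = (2 * B^2 - N * B - Q) / N^2"
    using N0 by (simp add: field_simps power2_eq_square)
  finally show ?thesis unfolding KKs N_def .
qed



lemma psi_diff:
  fixes x :: "'v::finite \<Rightarrow> nat option"
  shows "\<bar>psi k x - psi k (x(a:=t))\<bar> \<le> 4 / real CARD('v)"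
proof -
  define N where "N = real CARD('v)"
  have N0: "N > 0" unfolding N_def by simp
  define D where "D u w = KK k (x u) (x w) - KK k ((x(a:=t)) u) ((x(a:=t)) w)" for u w
  have Db: "\<bar>D u w\<bar> \<le> (if u = a then 2 else 0) + (if w = a then 2 else 0)" for u w
  proof (cases "u = a \<or> w = a")
    case True
    have "\<bar>D u w\<bar> \<le> 2" unfolding D_def
      using KK_abs[of k "x u" "x w"] KK_abs[of k "(x(a:=t)) u" "(x(a:=t)) w"] by linarith
    thus ?thesis using True by auto
  next
    case False thus ?thesis by (simp add: D_def)
  qed
  have "psi k x - psi k (x(a:=t)) = (\<Sum>u\<in>UNIV. \<Sum>w\<in>UNIV. D u w) / N^2"
    unfolding psi_rep[of k x] psi_rep[of k "x(a:=t)"] D_def N_def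
    by (simp add: sum_subtractf diff_divide_distrib)
  also have "\<bar>\<dots>\<bar> = \<bar>\<Sum>u\<in>UNIV. \<Sum>w\<in>UNIV. D u w\<bar> / N^2" by (simp add: abs_divide)
  also have "\<bar>\<Sum>u\<in>UNIV. \<Sum>w\<in>UNIV. D u w\<bar> \<le> (\<Sum>u\<in>UNIV. \<Sum>w\<in>UNIV. \<bar>D u w\<bar>)"
    by (rule order.trans[OF sum_abs sum_mono]) (rule sum_abs)
  also have "\<dots> \<le> (\<Sum>u\<in>UNIV. \<Sum>w\<in>(UNIV::'v set). (if u = a then 2 else 0) + (if w = a then 2 else 0))"
    by (intro sum_mono Db)
  also have "\<dots> = 4 * N"
    by (simp add: sum.distrib N_def sum_distrib_left[symmetric])
  finally have "\<bar>psi k x - psi k (x(a:=t))\<bar> \<le> 4 * N / N^2"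
    using N0 by (simp add: divide_right_mono fun_upd_def)
  also have "4 * N / N^2 = 4 / N" using N0 by (simp add: power2_eq_square)
  finally show ?thesis unfolding N_def .
qed

lemma prod_two:
  fixes A B :: real
  assumes "u \<noteq> w"
  shows "(\<Prod>z\<in>(UNIV::'a::finite set). (if z = u then A else if z = w then B else 1)) = A * B"
proof -
  have "(\<Prod>z\<in>(UNIV::'a set). (if z = u then A else if z = w then B else 1)) =
        A * (\<Prod>z\<in>UNIV - {u}. (if z = u then A else if z = w then B else 1))"
    by (subst prod.remove[of _ u]) auto
  also have "(\<Prod>z\<in>UNIV - {u}. (if z = u then A else if z = w then B else 1)) =
      B * (\<Prod>z\<in>UNIV - {u} - {w}. (if z = u then A else if z = w then B else 1))"
    using assms by (subst prod.remove[of _ w]) auto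
  also have "(\<Prod>z\<in>UNIV - {u} - {w}. (if z = u then A else if z = w then B else 1)) = 1"
    by (intro prod.neutral) auto
  finally show ?thesis by simp
qed

lemma E_comp1:
  fixes p :: "'a::finite \<Rightarrow> 'b pmf" and f :: "'b \<Rightarrow> real"
  shows "measure_pmf.expectation (Pi_pmf UNIV dflt p) (\<lambda>x. f (x u)) = measure_pmf.expectation (p u) f"
proof -
  have "map_pmf (\<lambda>x. x u) (Pi_pmf UNIV dflt p) = p u" by (simp add: Pi_pmf_component)
  hence "measure_pmf.expectation (p u) f = measure_pmf.expectation (map_pmf (\<lambda>x. x u) (Pi_pmf UNIV dflt p)) f"
    by simp
  thus ?thesis by simp
qed

lemma E_comp2:
  fixes p :: "'a::finite \<Rightarrow> 'b pmf" and f g :: "'b \<Rightarrow> real"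
  assumes uw: "u \<noteq> w" and fin: "\<And>b. finite (set_pmf (p b))"
  and f0: "\<And>y. f y \<ge> 0" and g0: "\<And>y. g y \<ge> 0"
  shows "measure_pmf.expectation (Pi_pmf UNIV dflt p) (\<lambda>x. f (x u) * g (x w)) =
         measure_pmf.expectation (p u) f * measure_pmf.expectation (p w) g"
proof -
  define ff where "ff z = (if z = u then f else if z = w then g else (\<lambda>_. 1))" for z
  have 1: "(\<Prod>z\<in>UNIV. ff z (x z)) = f (x u) * g (x w)" for x
  proof -
    have "ff z (x z) = (if z = u then f (x u) else if z = w then g (x w) else 1)" for z
      by (simp add: ff_def)
    thus ?thesis using prod_two[OF uw] by simp
  qed
  have 2: "(\<Prod>z\<in>UNIV. measure_pmf.expectation (p z) (ff z)) =
      measure_pmf.expectation (p u) f * measure_pmf.expectation (p w) g"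
  proof -
    have "measure_pmf.expectation (p z) (ff z) = (if z = u then measure_pmf.expectation (p u) f
       else if z = w then measure_pmf.expectation (p w) g else 1)" for z
      by (simp add: ff_def)
    thus ?thesis using prod_two[OF uw] by simp
  qed
  have "measure_pmf.expectation (Pi_pmf UNIV dflt p) (\<lambda>x. \<Prod>z\<in>UNIV. ff z (x z)) =
        (\<Prod>z\<in>UNIV. measure_pmf.expectation (p z) (\<lambda>v. ff z v))"
    by (rule expectation_prod_Pi_pmf) (auto simp: ff_def f0 g0 integrable_measure_pmf_finite fin)
  thus ?thesis unfolding 1 using 2 by simp
qed

definition pp :: "('v::finite \<Rightarrow> nat option) \<Rightarrow> 'v \<Rightarrow> nat option pmf" where
  "pp opn = (\<lambda>u. map_pmf (\<lambda>v. usd_update (opn u) (opn v)) (pmf_of_set (UNIV :: 'v set)))"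

lemma gs_eq: "gossip_step opn = Pi_pmf UNIV undefined (pp opn)"
  unfolding gossip_step_def pp_def ..

lemma fin_pp: "finite (set_pmf (pp opn u))"
  unfolding pp_def by simp

lemma E_pp:
  fixes opn :: "'v::finite \<Rightarrow> nat option"
  shows "measure_pmf.expectation (pp opn u) f = (\<Sum>v\<in>UNIV. f (usd_update (opn u) (opn v))) / real CARD('v)"
  unfolding pp_def by (simp add: integral_pmf_of_set)

lemma ind_upd: "ind (usd_update s t) i = ind s i * (ind t i + nn t) + nn s * ind t i"
  by (cases s; cases t) (auto simp: ind_def nn_def)

lemma upd_None: "usd_update s None = s"
  by (cases s) auto

lemma prob_pp:
  fixes opn :: "'v::finite \<Rightarrow> nat option"
  shows "measure_pmf.prob (pp opn u) {z. z \<noteq> opn u} \<le> real (card {v. opn v \<noteq> None}) / real CARD('v)"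
proof -
  have "measure_pmf.prob (pp opn u) {z. z \<noteq> opn u} =
        measure_pmf.prob (pmf_of_set (UNIV::'v set)) {v. usd_update (opn u) (opn v) \<noteq> opn u}"
    unfolding pp_def by (simp add: vimage_def)
  also have "\<dots> = real (card {v. usd_update (opn u) (opn v) \<noteq> opn u}) / real CARD('v)"
    by (simp add: measure_pmf_of_set)
  also have "\<dots> \<le> real (card {v. opn v \<noteq> None}) / real CARD('v)"
  proof (intro divide_right_mono of_nat_mono card_mono)
    show "{v. usd_update (opn u) (opn v) \<noteq> opn u} \<subseteq> {v. opn v \<noteq> None}"
      using upd_None by (metis (mono_tags, lifting) Collect_mono)
  qed auto
  finally show ?thesis .
qed

lemma m_formula:
  fixes opn :: "'v::finite \<Rightarrow> nat option"
  shows "measure_pmf.expectation (pp opn u) (\<lambda>t. ind t i) =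
     ind (opn u) i * ((\<Sum>v\<in>UNIV. ind (opn v) i) / real CARD('v) + (\<Sum>v\<in>UNIV. nn (opn v)) / real CARD('v))
     + nn (opn u) * ((\<Sum>v\<in>UNIV. ind (opn v) i) / real CARD('v))"
  unfolding E_pp ind_upd
  by (simp add: sum.distrib sum_distrib_left add_divide_distrib algebra_simps)

lemma dec_nonneg: "dec k t \<ge> 0" by (simp add: dec_eq)
lemma ind_nonneg: "ind t i \<ge> 0" by (simp add: ind_def)
lemma nn_nonneg: "nn t \<ge> 0" by (simp add: nn_def)

lemma dec_nn: "t \<in> opinions k \<Longrightarrow> dec k t + nn t = 1"
  by (auto simp: opinions_def dec_eq nn_def)

lemma E_bound:
  fixes opn :: "'v::finite \<Rightarrow> nat option"
  assumes op: "\<forall>u. opn u \<in> opinions k"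
  shows "measure_pmf.expectation (gossip_step opn) (psi k) \<le> beta k opn / real CARD('v)"
proof -
  define N where "N = real CARD('v)"
  have N0: "N > 0" unfolding N_def by simp
  define P where "P = gossip_step opn"
  have P: "P = Pi_pmf UNIV undefined (pp opn)" unfolding P_def by (rule gs_eq)
  have finP: "finite (set_pmf P)" unfolding P by (intro fin_Pi fin_pp) auto
  have int: "integrable (measure_pmf P) h" for h :: "_ \<Rightarrow> real"
    using finP by (rule integrable_measure_pmf_finite)
  have intp: "integrable (measure_pmf (pp opn u)) h" for h :: "_ \<Rightarrow> real" and u
    using fin_pp by (rule integrable_measure_pmf_finite)
  define A where "A i = (\<Sum>v\<in>UNIV. ind (opn v) i) / N" for i
  define Z where "Z = (\<Sum>v\<in>UNIV. nn (opn v)) / N"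
  define m where "m u i = measure_pmf.expectation (pp opn u) (\<lambda>t. ind t i)" for u i
  define D where "D u = measure_pmf.expectation (pp opn u) (dec k)" for u
  have m_eq: "m u i = ind (opn u) i * (A i + Z) + nn (opn u) * A i" for u i
    unfolding m_def m_formula A_def Z_def N_def ..
  have D_eq: "D u = (\<Sum>i\<in>{1..k}. m u i)" for u
    unfolding D_def m_def dec_def by (simp add: intp)
  have A0: "A i \<ge> 0" for i unfolding A_def using N0 by (intro divide_nonneg_pos sum_nonneg ind_nonneg) auto
  have Z0: "Z \<ge> 0" unfolding Z_def using N0 by (intro divide_nonneg_pos sum_nonneg nn_nonneg) auto
  have sA: "(\<Sum>i\<in>{1..k}. A i) = (\<Sum>v\<in>UNIV. dec k (opn v)) / N"
    unfolding A_def dec_def by (simp add: sum_divide_distrib[symmetric]) (rule disjI2, rule sum.swap)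
  have sumA: "(\<Sum>i\<in>{1..k}. A i) + Z = 1"
  proof -
    have "(\<Sum>i\<in>{1..k}. A i) + Z = (\<Sum>v\<in>UNIV. dec k (opn v) + nn (opn v)) / N"
      unfolding sA Z_def by (simp add: sum.distrib add_divide_distrib)
    also have "\<dots> = 1" using op N0 by (simp add: dec_nn N_def)
    finally show ?thesis .
  qed
  have beta_eq: "beta k opn = (\<Sum>i\<in>{1..k}. A i)"
    unfolding beta_def alpha_def card_ind A_def N_def ..
  have EKK: "measure_pmf.expectation P (\<lambda>x. KK k (x u) (x w)) =
     (if u = w then 0 else 2 * D u * D w - D u - (\<Sum>i\<in>{1..k}. m u i * m w i))" for u w
  proof (cases "u = w")
    case True thus ?thesis by (simp add: KK_diag)
  next
    case False
    have "measure_pmf.expectation P (\<lambda>x. KK k (x u) (x w)) =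
      2 * measure_pmf.expectation P (\<lambda>x. dec k (x u) * dec k (x w))
      - measure_pmf.expectation P (\<lambda>x. dec k (x u))
      - (\<Sum>i\<in>{1..k}. measure_pmf.expectation P (\<lambda>x. ind (x u) i * ind (x w) i))"
      unfolding KK_def by (simp add: int mult.assoc)
    also have "\<dots> = 2 * D u * D w - D u - (\<Sum>i\<in>{1..k}. m u i * m w i)"
    proof -
      have e1: "measure_pmf.expectation P (\<lambda>x. dec k (x u) * dec k (x w)) = D u * D w"
        unfolding P D_def by (rule E_comp2[OF False fin_pp dec_nonneg dec_nonneg])
      have e2: "measure_pmf.expectation P (\<lambda>x. ind (x u) i * ind (x w) i) = m u i * m w i" for i
        unfolding P m_def by (rule E_comp2[OF False fin_pp ind_nonneg ind_nonneg])
      have e3: "measure_pmf.expectation P (\<lambda>x. dec k (x u)) = D u"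
        unfolding P D_def by (rule E_comp1)
      show ?thesis unfolding e1 e2 e3 by simp
    qed
    finally show ?thesis using False by simp
  qed
  have Epsi: "measure_pmf.expectation P (psi k) =
      (\<Sum>u\<in>UNIV. \<Sum>w\<in>UNIV. measure_pmf.expectation P (\<lambda>x. KK k (x u) (x w))) / N^2"
  proof -
    have "psi k = (\<lambda>x::'v \<Rightarrow> nat option. (\<Sum>u\<in>UNIV. \<Sum>w\<in>UNIV. KK k (x u) (x w)) / N^2)"
      unfolding N_def by (intro ext psi_rep)
    thus ?thesis by (simp add: int)
  qed
  define T where "T u w = 2 * D u * D w - D u - (\<Sum>i\<in>{1..k}. m u i * m w i)" for u w
  have split: "(\<Sum>u\<in>UNIV. \<Sum>w\<in>UNIV. (if u = w then 0 else T u w)) =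
      (\<Sum>u\<in>UNIV. \<Sum>w\<in>UNIV. T u w) - (\<Sum>u\<in>UNIV. T u u)"
  proof -
    have "(\<Sum>w\<in>UNIV. (if u = w then 0 else T u w)) = (\<Sum>w\<in>UNIV. T u w) - T u u" for u
    proof -
      have "(\<Sum>w\<in>UNIV. T u w) = (\<Sum>w\<in>UNIV. (if u = w then 0 else T u w) + (if u = w then T u u else 0))"
        by (intro sum.cong) auto
      thus ?thesis by (simp add: sum.distrib)
    qed
    thus ?thesis by (simp add: sum_subtractf)
  qed
  define mm where "mm i = A i * (A i + 2 * Z)" for i
  have sm: "(\<Sum>u\<in>UNIV. m u i) = N * mm i" for i
  proof -
    have "(\<Sum>u\<in>UNIV. m u i) = (\<Sum>u\<in>UNIV. ind (opn u) i) * (A i + Z) + (\<Sum>u\<in>UNIV. nn (opn u)) * A i"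
      unfolding m_eq by (simp add: sum.distrib sum_distrib_right)
    also have "(\<Sum>u\<in>UNIV. ind (opn u) i) = N * A i" unfolding A_def using N0 by simp
    also have "(\<Sum>u\<in>UNIV. nn (opn u)) = N * Z" unfolding Z_def using N0 by simp
    finally show ?thesis unfolding mm_def by (simp add: algebra_simps)
  qed
  have sD: "(\<Sum>u\<in>UNIV. D u) = N * (\<Sum>i\<in>{1..k}. mm i)"
    unfolding D_eq by (subst sum.swap) (simp add: sm sum_distrib_left)
  have main1: "(\<Sum>u\<in>UNIV. \<Sum>w\<in>UNIV. T u w) \<le> 0"
  proof -
    have a: "(\<Sum>u\<in>UNIV. \<Sum>w\<in>UNIV. D u * D w) = (\<Sum>u\<in>UNIV. D u)^2"
      unfolding power2_eq_square sum_product ..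
    have b: "(\<Sum>u\<in>UNIV. \<Sum>w\<in>(UNIV::'v set). D u) = N * (\<Sum>u\<in>UNIV. D u)"
      unfolding N_def by (simp add: sum_distrib_left)
    have c: "(\<Sum>u\<in>UNIV. \<Sum>w\<in>UNIV. \<Sum>i\<in>{1..k}. m u i * m w i) = (\<Sum>i\<in>{1..k}. (\<Sum>u\<in>UNIV. m u i)^2)"
    proof -
      have "(\<Sum>u\<in>UNIV. \<Sum>w\<in>UNIV. \<Sum>i\<in>{1..k}. m u i * m w i) =
            (\<Sum>u\<in>UNIV. \<Sum>i\<in>{1..k}. \<Sum>w\<in>UNIV. m u i * m w i)"
        by (intro sum.cong refl sum.swap)
      also have "\<dots> = (\<Sum>i\<in>{1..k}. \<Sum>u\<in>UNIV. \<Sum>w\<in>UNIV. m u i * m w i)"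
        by (rule sum.swap)
      finally show ?thesis unfolding power2_eq_square sum_product by simp
    qed
    have "(\<Sum>u\<in>UNIV. \<Sum>w\<in>UNIV. T u w) =
       2 * (\<Sum>u\<in>UNIV. \<Sum>w\<in>UNIV. D u * D w) - (\<Sum>u\<in>UNIV. \<Sum>w\<in>(UNIV::'v set). D u)
       - (\<Sum>u\<in>UNIV. \<Sum>w\<in>UNIV. \<Sum>i\<in>{1..k}. m u i * m w i)"
      unfolding T_def by (simp add: sum_subtractf sum_distrib_left mult.assoc)
    also have "\<dots> = N^2 * (2 * (\<Sum>i\<in>{1..k}. mm i)^2 - (\<Sum>i\<in>{1..k}. mm i) - (\<Sum>i\<in>{1..k}. (mm i)^2))"
    proof -
      define S where "S = (\<Sum>i\<in>{1..k}. mm i)"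
      define Q where "Q = (\<Sum>i\<in>{1..k}. (mm i)^2)"
      have q: "(\<Sum>i\<in>{1..k}. (N * mm i)^2) = N^2 * Q"
        unfolding Q_def by (simp add: power_mult_distrib sum_distrib_left)
      have "2 * (N * S)^2 - N * (N * S) - N^2 * Q = N^2 * (2 * S^2 - S - Q)"
        by (simp add: power2_eq_square algebra_simps)
      thus ?thesis unfolding a b c sD sm q S_def[symmetric] Q_def[symmetric] .
    qed
    also have "\<dots> \<le> 0"
    proof -
      have "2 * (\<Sum>i\<in>{1..k}. mm i)^2 - (\<Sum>i\<in>{1..k}. mm i) - (\<Sum>i\<in>{1..k}. (mm i)^2) \<le> 0"
        unfolding mm_def by (rule mf_ineq[OF _ A0 Z0 sumA]) auto
      thus ?thesis by (simp add: mult_nonneg_nonpos)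
    qed
    finally show ?thesis .
  qed
  have main2: "- T u u \<le> (\<Sum>i\<in>{1..k}. A i)" for u
  proof -
    have "opn u \<in> opinions k" using op by auto
    then consider "opn u = None" | j where "j \<in> {1..k}" "opn u = Some j"
      unfolding opinions_def by auto
    thus ?thesis
    proof cases
      case 1
      have mu: "m u i = A i" for i unfolding m_eq 1 by (simp add: ind_def nn_def)
      define s where "s = (\<Sum>i\<in>{1..k}. A i)"
      have Du: "D u = s" unfolding D_eq mu s_def ..
      have "(\<Sum>i\<in>{1..k}. A i * A i) \<le> (\<Sum>i\<in>{1..k}. A i * s)"
      proof (intro sum_mono mult_left_mono A0)
        fix i assume "i \<in> {1..k}"
        thus "A i \<le> s" unfolding s_def using A0 by (intro member_le_sum) auto
      qed
      hence "(\<Sum>i\<in>{1..k}. A i * A i) \<le> s * s" by (simp add: s_def sum_distrib_right[symmetric])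
      hence "- T u u \<le> s - s * s" unfolding T_def Du mu by (simp add: algebra_simps)
      also have "\<dots> \<le> s" by simp
      finally show ?thesis unfolding s_def .
    next
      case 2
      have mu: "m u i = (if i = j then A j + Z else 0)" for i unfolding m_eq 2 by (simp add: ind_def nn_def)
      have Du: "D u = A j + Z" unfolding D_eq mu using 2 by simp
      have Su: "(\<Sum>i\<in>{1..k}. m u i * m u i) = (A j + Z) * (A j + Z)" 
      proof -
        have "(\<Sum>i\<in>{1..k}. m u i * m u i) = (\<Sum>i\<in>{1..k}. if i = j then (A j + Z) * (A j + Z) else 0)"
          unfolding mu by (intro sum.cong) auto
        thus ?thesis using 2 by simp
      qed
      have "- T u u = (A j + Z) - (A j + Z) * (A j + Z)" unfolding T_def Du Su by (simp add: algebra_simps)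
      also have "\<dots> \<le> 1 - (A j + Z)"
      proof -
        define y where "y = A j + Z"
        have "0 \<le> (1 - y)^2" by simp
        moreover have "(1 - y)^2 = 1 - 2*y + y*y" by (simp add: power2_eq_square algebra_simps)
        ultimately show ?thesis unfolding y_def[symmetric] by linarith
      qed
      also have "\<dots> \<le> (\<Sum>i\<in>{1..k}. A i)" using sumA A0[of j] by linarith
      finally show ?thesis .
    qed
  qed
  have "measure_pmf.expectation P (psi k) =
     ((\<Sum>u\<in>UNIV. \<Sum>w\<in>UNIV. T u w) - (\<Sum>u\<in>UNIV. T u u)) / N^2"
  proof -
    have "measure_pmf.expectation P (\<lambda>x. KK k (x u) (x w)) = (if u = w then 0 else T u w)" for u w
      unfolding EKK T_def ..
    thus ?thesis unfolding Epsi split by (simp only: split)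
  qed
  also have "\<dots> \<le> (0 + N * (\<Sum>i\<in>{1..k}. A i)) / N^2"
  proof (intro divide_right_mono add_mono) 
    have "- (\<Sum>u\<in>UNIV. T u u) \<le> (\<Sum>u\<in>(UNIV::'v set). (\<Sum>i\<in>{1..k}. A i))"
      unfolding sum_negf[symmetric] by (intro sum_mono main2)
    thus "(\<Sum>u\<in>UNIV. \<Sum>w\<in>UNIV. T u w) - (\<Sum>u\<in>UNIV. T u u) \<le> 0 + N * (\<Sum>i\<in>{1..k}. A i)"
      using main1 unfolding N_def by simp
  qed simp
  also have "\<dots> = beta k opn / N" unfolding beta_eq using N0 by (simp add: power2_eq_square)
  finally show ?thesis unfolding P_def N_def .
qed

lemma beta_card:
  fixes opn :: "'v::finite \<Rightarrow> nat option"
  assumes op: "\<forall>u. opn u \<in> opinions k"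
  shows "beta k opn = real (card {v. opn v \<noteq> None}) / real CARD('v)"
proof -
  have "beta k opn = (\<Sum>i\<in>{1..k}. \<Sum>v\<in>UNIV. ind (opn v) i) / real CARD('v)"
    unfolding beta_def alpha_def card_ind by (simp add: sum_divide_distrib)
  also have "(\<Sum>i\<in>{1..k}. \<Sum>v\<in>UNIV. ind (opn v) i) = (\<Sum>v\<in>UNIV. dec k (opn v))"
    unfolding dec_def by (rule sum.swap)
  also have "\<dots> = (\<Sum>v\<in>UNIV. if opn v \<noteq> None then 1 else 0)"
  proof (intro sum.cong refl)
    fix v
    have "opn v \<in> opinions k" using op by auto
    thus "dec k (opn v) = (if opn v \<noteq> None then 1 else 0)"
      by (auto simp: opinions_def dec_eq)
  qed
  also have "\<dots> = real (card {v. opn v \<noteq> None})"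
    by (simp add: sum.If_cases)
  finally show ?thesis .
qed

lemma final_ineq:
  fixes l n b :: real
  assumes n0: "n > 0" and b0: "b \<ge> 0" and lc: "\<bar>l\<bar> * (24 / n) < 3"
  shows "l^2 * (4/n)^2 * exp (2 * \<bar>l\<bar> * (4/n)) * (n * b) / 2 \<le>
         (l^2 * (400 * b / n) / 2) / (1 - \<bar>l\<bar> * (24 / n) / 3)"
proof -
  define r where "r = 8 * \<bar>l\<bar> / n"
  have r0: "r \<ge> 0" unfolding r_def using n0 by simp
  have r1: "r < 1" using lc n0 unfolding r_def by (simp add: field_simps)
  have den: "1 - \<bar>l\<bar> * (24 / n) / 3 = 1 - r" unfolding r_def by (simp add: field_simps)
  have ex: "2 * \<bar>l\<bar> * (4/n) = r" unfolding r_def by simp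
  define K where "K = l^2 * b / n"
  have K0: "K \<ge> 0" unfolding K_def using n0 b0 by simp
  have lhs: "l^2 * (4/n)^2 * exp r * (n * b) / 2 = K * (8 * exp r)"
    unfolding K_def using n0 by (simp add: power2_eq_square field_simps)
  have rhs: "(l^2 * (400 * b / n) / 2) / (1 - r) = K * (200 / (1 - r))"
    unfolding K_def by (simp add: field_simps)
  have "exp r * (1 - r) \<le> exp r * exp (-r)"
    using exp_ge_add_one_self[of "-r"] by (intro mult_left_mono) auto
  hence "exp r * (1 - r) \<le> 1" by (simp add: exp_minus)
  hence "exp r \<le> 1 / (1 - r)" using r1 by (simp add: field_simps)
  hence "8 * exp r \<le> 200 / (1 - r)"
  proof -
    assume "exp r \<le> 1 / (1 - r)"
    hence "8 * exp r \<le> 8 / (1 - r)" by simp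
    also have "\<dots> \<le> 200 / (1 - r)" using r1 by (intro divide_right_mono) auto
    finally show ?thesis .
  qed
  hence "K * (8 * exp r) \<le> K * (200 / (1 - r))" using K0 by (rule mult_left_mono)
  thus ?thesis unfolding ex den lhs rhs .
qed

theorem mainTheorem8:
  fixes opn :: "'v::finite \<Rightarrow> nat option" and k :: nat
  assumes "\<forall>u. opn u \<in> opinions k"
  defines "n \<equiv> real CARD('v)"
  defines "E \<equiv> measure_pmf.expectation (gossip_step opn) (psi k)"
  shows "E \<le> beta k opn / n \<and>
         bernstein_cond (gossip_step opn) (\<lambda>x. psi k x - E) (24 / n) (400 * beta k opn / n)"
proof
  show "E \<le> beta k opn / n" unfolding E_def n_def by (rule E_bound[OF assms(1)])
next
  have n0: "n > 0" unfolding n_def by simp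
  have b0: "beta k opn \<ge> 0" unfolding beta_card[OF assms(1)] by simp
  show "bernstein_cond (gossip_step opn) (\<lambda>x. psi k x - E) (24 / n) (400 * beta k opn / n)"
    unfolding bernstein_cond_def
  proof (intro allI impI)
    fix l :: real
    assume lc: "\<bar>l\<bar> * (24 / n) < 3"
    have "measure_pmf.expectation (gossip_step opn) (\<lambda>x. exp (l * (psi k x - E)))
        \<le> exp (l^2 * (4/n)^2 * exp (2*\<bar>l\<bar>*(4/n)) * (\<Sum>a\<in>(UNIV::'v set). beta k opn) / 2)"
    proof -
      have h1: "\<bar>psi k x - psi k (x(a := opn a))\<bar> \<le> 4 / n" if "a \<in> UNIV" for x a
        unfolding n_def by (rule psi_diff)
      have h2: "measure_pmf.prob (pp opn a) {z. z \<noteq> opn a} \<le> beta k opn" if "a \<in> UNIV" for a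
        unfolding beta_card[OF assms(1)] n_def by (rule prob_pp)
      have c0: "0 \<le> 4 / n" using n0 by simp
      note G = gl[where A=UNIV and p="pp opn" and d=opn and c="4/n" and \<pi>="\<lambda>_. beta k opn" and F="psi k" and dflt=undefined and l=l, OF _ fin_pp c0 h1 h2]
      show ?thesis unfolding E_def gs_eq by (rule G) simp
    qed
    also have "\<dots> \<le> exp ((l^2 * (400 * beta k opn / n) / 2) / (1 - \<bar>l\<bar> * (24 / n) / 3))"
    proof -
      have s: "(\<Sum>a\<in>(UNIV::'v set). beta k opn) = n * beta k opn" unfolding n_def by simp
      show ?thesis unfolding s exp_le_cancel_iff by (rule final_ineq[OF n0 b0 lc])
    qed
    finally show "measure_pmf.expectation (gossip_step opn) (\<lambda>x. exp (l * (psi k x - E)))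
        \<le> exp ((l^2 * (400 * beta k opn / n) / 2) / (1 - \<bar>l\<bar> * (24 / n) / 3))" .
  qed
qed


end
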